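(* Let $\mathbf B=(\mathbf b_1,\dots,\mathbf b_n)\in\mathbb Q^{d\times n}$ be a basis, $\gamma\ge2$, and $\mathbf B'=(\mathbf b_1',\dots,\mathbf b_n'):=A_{\mathbf B,\gamma}\mathbf B$. Then $\alpha_1\le\alpha_2\le\cdots\le\alpha_n$, and for every $i$, if $\alpha_i<\alpha_{i+1}$ then $\|\tilde{\mathbf b}_{i+1}'\|>(\gamma/2)\cdot\|\tilde{\mathbf b}_i'\|$.
   Context: Gram–Schmidt orthogonalization: $\tilde{\mathbf b}_1=\mathbf b_1$, $\tilde{\mathbf b}_i=\Pi_{\{\mathbf b_1,\dots,\mathbf b_{i-1}\}^\perp}(\mathbf b_i)$, where $\Pi_{S^\perp}$ is orthogonal projection onto the orthogonal complement of $\mathrm{span}(S)$; similarly $\tilde{\mathbf b}_i'$ for $\mathbf B'$. Define $\alpha_1=1$ and $\alpha_i=\max\{\alpha_{i-1},\lceil \|\tilde{\mathbf b}_i\|/(\gamma^i\|\mathbf b_1\|)\rceil\}$ for $i\ge2$. $A_{\mathbf B,\gamma}\in\mathbb R^{d\times d}$ is the unique linear map with $A_{\mathbf B,\gamma}\tilde{\mathbf b}_i=\tilde{\mathbf b}_i/\alpha_i$ for all $i$ and $A_{\mathbf B,\gamma}\mathbf y=\mathbf y$ for $\mathbf y\in\{\mathbf b_1,\dots,\mathbf b_n\}^\perp$. *)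

theory Defs
  imports "HOL-Analysis.Analysis"
begin

text \<open>Vectors live in \<open>real ^ 'd\<close> (d = CARD('d)); a sequence of n vectors is
  \<open>b :: nat \<Rightarrow> real ^ 'd\<close> with indices 1..n.\<close>

definition orth_compl :: "('a::real_inner) set \<Rightarrow> 'a set" where
  "orth_compl S = {y. \<forall>x\<in>span S. orthogonal x y}"

definition proj_perp :: "('a::euclidean_space) set \<Rightarrow> 'a \<Rightarrow> 'a" where
  "proj_perp S v = (THE w. w \<in> orth_compl S \<and> v - w \<in> span S)"

definition gso :: "(nat \<Rightarrow> 'a::euclidean_space) \<Rightarrow> nat \<Rightarrow> 'a" where
  "gso b i = proj_perp (b ` {1..<i}) (b i)"

fun alpha :: "(nat \<Rightarrow> real ^ 'd) \<Rightarrow> real \<Rightarrow> nat \<Rightarrow> real" where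
  "alpha b \<gamma> 0 = 1"
| "alpha b \<gamma> (Suc 0) = 1"
| "alpha b \<gamma> (Suc (Suc k)) =
     max (alpha b \<gamma> (Suc k))
         (of_int \<lceil>norm (gso b (Suc (Suc k))) / (\<gamma> ^ (Suc (Suc k)) * norm (b 1))\<rceil>)"

definition A_map :: "(nat \<Rightarrow> real ^ 'd) \<Rightarrow> nat \<Rightarrow> real \<Rightarrow> real ^ 'd ^ 'd" where
  "A_map b n \<gamma> = (THE M. (\<forall>i\<in>{1..n}. M *v gso b i = gso b i /\<^sub>R alpha b \<gamma> i)
                       \<and> (\<forall>y\<in>orth_compl (b ` {1..n}). M *v y = y))"

end

theory Submission
  imports Defs
begin

lemma proj_perp_eq:
  fixes S :: "'a::euclidean_space set"
  assumes "w \<in> orth_compl S" "v - w \<in> span S"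
  shows "proj_perp S v = w"
  unfolding proj_perp_def
proof (rule the_equality)
  show "w \<in> orth_compl S \<and> v - w \<in> span S" using assms by simp
next
  fix w' assume h: "w' \<in> orth_compl S \<and> v - w' \<in> span S"
  have d: "w - w' \<in> span S" using span_diff[OF h[THEN conjunct2] assms(2)] by (simp add: algebra_simps)
  have "w - w' \<in> orth_compl S" using h assms unfolding orth_compl_def
    by (auto intro: orthogonal_clauses)
  then have "orthogonal (w - w') (w - w')" using d unfolding orth_compl_def by auto
  then show "w' = w" by (simp add: orthogonal_def)
qed

lemma proj_perp_props:
  fixes S :: "'a::euclidean_space set"
  shows "proj_perp S v \<in> orth_compl S \<and> v - proj_perp S v \<in> span S"
proof -
  obtain y z where "y \<in> span S" "\<And>w. w \<in> span S \<Longrightarrow> orthogonal z w" "v = y + z"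
    using orthogonal_subspace_decomp_exists by blast
  then have "z \<in> orth_compl S" "v - z \<in> span S"
    unfolding orth_compl_def by (auto simp: orthogonal_commute)
  then show ?thesis using proj_perp_eq by metis
qed

lemma gso_props:
  "gso b i \<in> orth_compl (b ` {1..<i})" "b i - gso b i \<in> span (b ` {1..<i})"
  using proj_perp_props unfolding gso_def by blast+

lemma gso_span_sub: "span (b ` {1..<j}) \<subseteq> span (gso b ` {1..<j})"
proof (induction j)
  case 0 then show ?case by simp
next
  case (Suc j)
  show ?case
  proof (cases "j = 0")
    case True then show ?thesis by simp
  next
    case False
    then have eq: "{1..<Suc j} = insert j {1..<j}" by auto
    have "b j - gso b j \<in> span (gso b ` {1..<j})" using gso_props(2)[of b j] Suc by blast
    then have "b j \<in> span (gso b ` {1..<Suc j})"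
      by (smt (verit, ccfv_SIG) add.commute diff_add_cancel eq image_insert insertI1 span_add span_base span_mono subset_insertI subsetD)
    then show ?thesis using Suc unfolding eq
      by (simp add: span_insert_0 span_minimal subspace_span) (metis (no_types, lifting) dual_order.trans image_insert span_mono subset_insertI span_span insert_subset span_superset span_minimal subspace_span)
  qed
qed

lemma gso_in_span: "gso b k \<in> span (b ` {1..<Suc k})" if "k \<ge> 1"
proof -
  have "b k - gso b k \<in> span (b ` {1..<Suc k})"
  proof -
    have "b ` {1..<k} \<subseteq> b ` {1..<Suc k}" by auto
    then have "span (b ` {1..<k}) \<subseteq> span (b ` {1..<Suc k})" by (rule span_mono)
    then show ?thesis using gso_props(2)[of b k] by blast
  qed
  moreover have "b k \<in> span (b ` {1..<Suc k})" using that by (intro span_base) auto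
  ultimately have "b k - (b k - gso b k) \<in> span (b ` {1..<Suc k})" by (metis span_diff)
  then show ?thesis by simp
qed

lemma gso_span_sub2: "span (gso b ` {1..<j}) \<subseteq> span (b ` {1..<j})"
proof (rule span_minimal)
  show "gso b ` {1..<j} \<subseteq> span (b ` {1..<j})"
  proof
    fix x assume "x \<in> gso b ` {1..<j}"
    then obtain k where k: "k \<in> {1..<j}" "x = gso b k" by auto
    then have "x \<in> span (b ` {1..<Suc k})" using gso_in_span by auto
    moreover have "span (b ` {1..<Suc k}) \<subseteq> span (b ` {1..<j})" using k by (intro span_mono) auto
    ultimately show "x \<in> span (b ` {1..<j})" by auto
  qed
qed simp

lemma gso_span_eq: "span (gso b ` {1..<j}) = span (b ` {1..<j})"
  using gso_span_sub gso_span_sub2 by blast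

lemma gso_orth: "orthogonal (gso b i) (gso b k)" if "1 \<le> k" "k < i"
proof -
  have "gso b k \<in> span (gso b ` {1..<i})" using that by (intro span_base) auto
  then have "gso b k \<in> span (b ` {1..<i})" using gso_span_eq by blast
  then show ?thesis using gso_props(1)[of b i] unfolding orth_compl_def
    by (auto simp: orthogonal_commute)
qed

lemma gso_orth': "gso b i \<bullet> gso b k = 0" if "i \<noteq> k" "1 \<le> k" "1 \<le> i"
proof (cases "k < i")
  case True then show ?thesis using gso_orth[of k i b] that by (simp add: orthogonal_def)
next
  case False then have "i < k" using that by simp
  then show ?thesis using gso_orth[of i k b] that by (simp add: orthogonal_def inner_commute)
qed

lemma gso_1: "gso b 1 = b 1"
  unfolding gso_def by (rule proj_perp_eq) (auto simp: orth_compl_def orthogonal_def)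

lemma gso_nz:
  assumes "inj_on b {1..n}" "independent (b ` {1..n})" "i \<in> {1..n}"
  shows "gso b i \<noteq> 0"
proof
  assume "gso b i = 0"
  then have "b i \<in> span (b ` {1..<i})" using gso_props(2)[of b i] by simp
  moreover have "b ` {1..<i} \<subseteq> b ` {1..n} - {b i}"
  proof
    fix x assume "x \<in> b ` {1..<i}"
    then obtain k where k: "k \<in> {1..<i}" "x = b k" by auto
    then have "k \<in> {1..n}" "k \<noteq> i" using assms(3) by auto
    then have "b k \<noteq> b i" using assms(1,3) unfolding inj_on_def by blast
    then show "x \<in> b ` {1..n} - {b i}" using k \<open>k \<in> {1..n}\<close> by auto
  qed
  ultimately have "b i \<in> span (b ` {1..n} - {b i})" using span_mono by blast
  moreover have "b i \<in> b ` {1..n}" using assms(3) by auto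
  ultimately show False using assms(2) unfolding dependent_def by blast
qed

lemma alpha_ge1: "alpha b \<gamma> i \<ge> 1"
  by (induction b \<gamma> i rule: alpha.induct) auto

lemma gso_in_spanN: "k \<in> {1..n} \<Longrightarrow> gso b k \<in> span (b ` {1..n})"
  using gso_span_eq[of b "Suc n"] span_base[of "gso b k" "gso b ` {1..<Suc n}"]
  by (metis atLeastLessThanSuc_atLeastAtMost image_eqI)

lemma A_map_props:
  fixes b :: "nat \<Rightarrow> real ^ 'd"
  assumes inj: "inj_on b {1..n}" and ind: "independent (b ` {1..n})"
  shows "\<forall>i\<in>{1..n}. A_map b n \<gamma> *v gso b i = gso b i /\<^sub>R alpha b \<gamma> i"
proof -
  define G where "G = gso b"
  define a where "a = alpha b \<gamma>"
  define P where "P = (\<lambda>M::real^'d^'d. (\<forall>i\<in>{1..n}. M *v gso b i = gso b i /\<^sub>R alpha b \<gamma> i)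
                       \<and> (\<forall>y\<in>orth_compl (b ` {1..n}). M *v y = y))"
  have Gnz: "G k \<bullet> G k \<noteq> 0" if "k \<in> {1..n}" for k
    using gso_nz[OF inj ind that] unfolding G_def by simp
  have orthN: "y \<bullet> G k = 0" if "y \<in> orth_compl (b ` {1..n})" "k \<in> {1..n}" for y k
    using that gso_in_spanN[of k n b] unfolding orth_compl_def G_def orthogonal_def by (auto simp: inner_commute)
  define c where "c = (\<lambda>k. (1 - 1 / a k) / (G k \<bullet> G k))"
  define f where "f = (\<lambda>x::real^'d. x - (\<Sum>k\<in>{1..n}. ((x \<bullet> G k) * c k) *\<^sub>R G k))"
  have lin: "linear f" unfolding f_def linear_iff
    by (auto simp: inner_add_left algebra_simps sum.distrib scaleR_sum_right sum_subtractf)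
  have fG: "f (G j) = G j /\<^sub>R a j" if j: "j \<in> {1..n}" for j
  proof -
    have "(\<Sum>k\<in>{1..n}. ((1 - 1 / a k) * (G j \<bullet> G k) / (G k \<bullet> G k)) *\<^sub>R G k)
        = ((1 - 1 / a j) * (G j \<bullet> G j) / (G j \<bullet> G j)) *\<^sub>R G j"
    proof -
      have "(\<Sum>k\<in>{1..n}. ((1 - 1 / a k) * (G j \<bullet> G k) / (G k \<bullet> G k)) *\<^sub>R G k)
        = ((1 - 1 / a j) * (G j \<bullet> G j) / (G j \<bullet> G j)) *\<^sub>R G j
          + (\<Sum>k\<in>{1..n}-{j}. ((1 - 1 / a k) * (G j \<bullet> G k) / (G k \<bullet> G k)) *\<^sub>R G k)"
        using j by (intro sum.remove) auto
      moreover have "(\<Sum>k\<in>{1..n}-{j}. ((1 - 1 / a k) * (G j \<bullet> G k) / (G k \<bullet> G k)) *\<^sub>R G k) = 0"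
        using j by (intro sum.neutral) (auto simp: G_def gso_orth')
      ultimately show ?thesis by simp
    qed
    also have "\<dots> = (1 - 1 / a j) *\<^sub>R G j" using Gnz[OF j] by simp
    finally have "f (G j) = G j - (1 - 1 / a j) *\<^sub>R G j" unfolding f_def c_def
      by (simp add: algebra_simps)
    also have "\<dots> = (1 / a j) *\<^sub>R G j" by (simp add: scaleR_diff_left)
    finally show ?thesis by (simp add: inverse_eq_divide)
  qed
  have fy: "f y = y" if y: "y \<in> orth_compl (b ` {1..n})" for y
    unfolding f_def using orthN[OF y] by simp
  have ex: "P (matrix f)" unfolding P_def
    using fG fy matrix_vector_mul(2)[OF lin] unfolding G_def a_def by metis
  have uniq: "M = M'" if PM: "P M" and PM': "P M'" for M M'
  proof -
    have "M *v x = M' *v x" for x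
    proof -
      obtain y z where yz: "y \<in> span (b ` {1..n})" "\<And>w. w \<in> span (b ` {1..n}) \<Longrightarrow> orthogonal z w" "x = y + z"
        using orthogonal_subspace_decomp_exists by blast
      have zo: "z \<in> orth_compl (b ` {1..n})" using yz(2) unfolding orth_compl_def
        by (auto simp: orthogonal_commute)
      have "y \<in> span (gso b ` {1..n})" using yz(1) gso_span_eq[of b "Suc n"]
        by (simp add: atLeastLessThanSuc_atLeastAtMost)
      moreover have sub: "subspace {v. M *v v = M' *v v}"
        by (auto simp: subspace_def matrix_vector_right_distrib matrix_vector_mult_scaleR)
      moreover have base: "gso b ` {1..n} \<subseteq> {v. M *v v = M' *v v}"
        using PM PM' unfolding P_def by auto
      ultimately have "y \<in> {v. M *v v = M' *v v}" using span_minimal by blast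
      moreover have "M *v z = M' *v z" using PM PM' zo unfolding P_def by auto
      ultimately show ?thesis using yz(3) by (simp add: matrix_vector_right_distrib)
    qed
    then show ?thesis by (simp add: matrix_eq)
  qed
  have "P (A_map b n \<gamma>)" unfolding A_map_def P_def[symmetric]
    by (rule theI[of P, OF ex]) (simp add: uniq ex)
  then show ?thesis unfolding P_def by blast
qed

lemma gso_upper:
  fixes b :: "nat \<Rightarrow> real ^ 'd"
  assumes "i \<ge> 1" "\<gamma> \<ge> 2" "norm (b 1) > 0"
  shows "norm (gso b i) \<le> alpha b \<gamma> i * \<gamma> ^ i * norm (b 1)"
proof (cases i)
  case 0 then show ?thesis using assms by simp
next
  case (Suc k)
  show ?thesis
  proof (cases k)
    case 0 then have i1: "i = 1" using Suc by simp
    have "1 * norm (b 1) \<le> \<gamma> * norm (b 1)" using assms by (intro mult_right_mono) auto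
    then show ?thesis using i1 gso_1[of b] by simp
  next
    case (Suc m)
    define y where "y = norm (gso b i) / (\<gamma> ^ i * norm (b 1))"
    have pos: "\<gamma> ^ i * norm (b 1) > 0" using assms by simp
    have "alpha b \<gamma> i \<ge> of_int \<lceil>y\<rceil>" using \<open>i = Suc k\<close> Suc unfolding y_def by simp
    moreover have "of_int \<lceil>y\<rceil> \<ge> y" by (rule le_of_int_ceiling)
    ultimately have "alpha b \<gamma> i \<ge> y" by linarith
    then have "alpha b \<gamma> i * (\<gamma> ^ i * norm (b 1)) \<ge> y * (\<gamma> ^ i * norm (b 1))"
      using pos by (intro mult_right_mono) auto
    also have "y * (\<gamma> ^ i * norm (b 1)) = norm (gso b i)"
      using nonzero_eq_divide_eq[of "\<gamma> ^ i * norm (b 1)" y "norm (gso b i)"] pos y_def by linarith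
    finally show ?thesis by (simp add: mult.assoc)
  qed
qed

lemma arith_step:
  fixes gI gS aI aS \<gamma> nb :: real
  assumes aI: "aI \<ge> 1" and lt: "aI < aS" and aS: "aS = max aI (of_int \<lceil>gS / (\<gamma> ^ Suc i * nb)\<rceil>)"
    and up: "gI \<le> aI * \<gamma> ^ i * nb" and g: "\<gamma> \<ge> 2" and nb: "nb > 0"
  shows "gS / aS > \<gamma> / 2 * (gI / aI)"
proof -
  define x where "x = gS / (\<gamma> ^ Suc i * nb)"
  have pos: "\<gamma> ^ Suc i * nb > 0" using g nb by simp
  have c: "aS = of_int \<lceil>x\<rceil>" using aS lt unfolding x_def by (auto simp: max_def split: if_splits)
  have "of_int \<lceil>x\<rceil> > (1::real)" using c lt aI by linarith
  then have "\<lceil>x\<rceil> > 1" by simp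
  then have "\<lceil>x\<rceil> \<ge> 2" by simp
  then have "of_int \<lceil>x\<rceil> \<ge> (2::real)" by simp
  have "x > of_int \<lceil>x\<rceil> - 1" by linarith
  then have "x > aS / 2" using c \<open>of_int \<lceil>x\<rceil> \<ge> (2::real)\<close> by linarith
  then have "gS > aS / 2 * (\<gamma> ^ Suc i * nb)" unfolding x_def using pos by (simp add: field_simps)
  then have 1: "gS / aS > \<gamma> ^ Suc i * nb / 2" using aI lt by (simp add: field_simps)
  have "gI / aI \<le> \<gamma> ^ i * nb" using up aI by (simp add: field_simps)
  then have "\<gamma> / 2 * (gI / aI) \<le> \<gamma> / 2 * (\<gamma> ^ i * nb)" using g by (intro mult_left_mono) auto
  also have "\<dots> = \<gamma> ^ Suc i * nb / 2" by simp
  finally show ?thesis using 1 by linarith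
qed

lemma gso_image:
  fixes b :: "nat \<Rightarrow> real ^ 'd" and A :: "real^'d^'d"
  assumes hA: "\<forall>i\<in>{1..n}. A *v gso b i = gso b i /\<^sub>R a i"
    and anz: "\<And>i. a i \<noteq> 0"
    and i: "i \<in> {1..n}"
  shows "gso (\<lambda>j. A *v b j) i = gso b i /\<^sub>R a i"
proof -
  define G where "G = gso b"
  define c where "c = (\<lambda>j. A *v b j)"
  have d1: "c j - G j /\<^sub>R a j \<in> span (G ` {1..<j})" if j: "j \<in> {1..n}" for j
  proof -
    have sub: "subspace {v. A *v v \<in> span (G ` {1..<j})}"
      by (auto simp: subspace_def matrix_vector_right_distrib matrix_vector_mult_scaleR span_add span_scale span_zero)
    have base: "G ` {1..<j} \<subseteq> {v. A *v v \<in> span (G ` {1..<j})}"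
    proof
      fix v assume "v \<in> G ` {1..<j}"
      then obtain k where k: "k \<in> {1..<j}" "v = G k" by auto
      then have "A *v v = G k /\<^sub>R a k" using hA j unfolding G_def by auto
      moreover have "G k \<in> span (G ` {1..<j})" using k by (intro span_base) auto
      ultimately show "v \<in> {v. A *v v \<in> span (G ` {1..<j})}" by (simp add: span_scale)
    qed
    have "b j - G j \<in> span (G ` {1..<j})" using gso_props(2)[of b j] gso_span_eq[of b j]
      unfolding G_def by simp
    then have "A *v (b j - G j) \<in> span (G ` {1..<j})" using span_minimal[OF base sub] by blast
    moreover have "A *v (b j - G j) = c j - G j /\<^sub>R a j"
      using hA j unfolding c_def G_def by (simp add: matrix_vector_mult_diff_distrib)
    ultimately show ?thesis by simp
  qed
  have s1: "span (c ` {1..<j}) \<subseteq> span (G ` {1..<j})" if "j \<le> Suc n" for j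
  proof (rule span_minimal)
    show "c ` {1..<j} \<subseteq> span (G ` {1..<j})"
    proof
      fix v assume "v \<in> c ` {1..<j}"
      then obtain k where k: "k \<in> {1..<j}" "v = c k" by auto
      have kn: "k \<in> {1..n}" using k that by auto
      have "span (G ` {1..<k}) \<subseteq> span (G ` {1..<j})" using k by (intro span_mono) auto
      then have "c k - G k /\<^sub>R a k \<in> span (G ` {1..<j})" using d1[OF kn] by blast
      moreover have "G k /\<^sub>R a k \<in> span (G ` {1..<j})" using k by (intro span_scale span_base) auto
      ultimately have "(c k - G k /\<^sub>R a k) + G k /\<^sub>R a k \<in> span (G ` {1..<j})" by (rule span_add)
      then show "v \<in> span (G ` {1..<j})" using k by simp
    qed
  qed simp
  have s2: "j \<le> Suc n \<Longrightarrow> G ` {1..<j} \<subseteq> span (c ` {1..<j})" for j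
  proof (induction j)
    case 0 then show ?case by simp
  next
    case (Suc j)
    show ?case
    proof (cases "j = 0")
      case True then show ?thesis by simp
    next
      case False
      then have jn: "j \<in> {1..n}" using Suc.prems by auto
      have eq: "{1..<Suc j} = insert j {1..<j}" using False by auto
      have IH: "span (G ` {1..<j}) \<subseteq> span (c ` {1..<j})"
        using Suc span_minimal[of "G ` {1..<j}" "span (c ` {1..<j})"] by simp
      have m: "span (c ` {1..<j}) \<subseteq> span (c ` {1..<Suc j})" by (intro span_mono) auto
      have "c j - G j /\<^sub>R a j \<in> span (c ` {1..<Suc j})" using d1[OF jn] IH m by blast
      moreover have "c j \<in> span (c ` {1..<Suc j})" using False by (intro span_base) auto
      ultimately have "c j - (c j - G j /\<^sub>R a j) \<in> span (c ` {1..<Suc j})" by (metis span_diff)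
      then have "G j /\<^sub>R a j \<in> span (c ` {1..<Suc j})" by simp
      then have "a j *\<^sub>R (G j /\<^sub>R a j) \<in> span (c ` {1..<Suc j})" by (rule span_scale)
      then have "G j \<in> span (c ` {1..<Suc j})" using anz[of j] by simp
      moreover have "G ` {1..<j} \<subseteq> span (c ` {1..<Suc j})" using Suc m False by auto
      ultimately show ?thesis unfolding eq by auto
    qed
  qed
  have seq: "span (c ` {1..<i}) = span (G ` {1..<i})"
    using s1[of i] s2[of i] i span_minimal[of "G ` {1..<i}" "span (c ` {1..<i})"] by auto
  have "gso c i = G i /\<^sub>R a i" unfolding gso_def
  proof (rule proj_perp_eq)
    show "c i - G i /\<^sub>R a i \<in> span (c ` {1..<i})" using d1[OF i] seq by simp
    show "G i /\<^sub>R a i \<in> orth_compl (c ` {1..<i})"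
      using gso_props(1)[of b i] seq gso_span_eq[of b i] unfolding orth_compl_def G_def
      by (auto simp: orthogonal_def)
  qed
  then show ?thesis unfolding c_def G_def .
qed

theorem mainTheorem12:
  fixes b :: "nat \<Rightarrow> real ^ 'd" and n :: nat and \<gamma> :: real
  assumes rat: "\<forall>i\<in>{1..n}. \<forall>k. b i $ k \<in> \<rat>"
    and basis: "inj_on b {1..n}" "independent (b ` {1..n})"
    and gamma: "\<gamma> \<ge> 2"
  defines "b' \<equiv> (\<lambda>i. A_map b n \<gamma> *v b i)"
  shows "(\<forall>i\<in>{1..<n}. alpha b \<gamma> i \<le> alpha b \<gamma> (Suc i))
       \<and> (\<forall>i\<in>{1..<n}. alpha b \<gamma> i < alpha b \<gamma> (Suc i) \<longrightarrow>
              norm (gso b' (Suc i)) > (\<gamma> / 2) * norm (gso b' i))"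
proof (intro conjI ballI impI)
  fix i assume i: "i \<in> {1..<n}"
  then obtain k where k: "i = Suc k" by (cases i) auto
  show "alpha b \<gamma> i \<le> alpha b \<gamma> (Suc i)" unfolding k by simp
next
  fix i assume i: "i \<in> {1..<n}" and lt: "alpha b \<gamma> i < alpha b \<gamma> (Suc i)"
  then obtain k where k: "i = Suc k" by (cases i) auto
  have hA: "\<forall>i\<in>{1..n}. A_map b n \<gamma> *v gso b i = gso b i /\<^sub>R alpha b \<gamma> i"
    by (rule A_map_props[OF basis])
  have anz: "\<And>i. alpha b \<gamma> i \<noteq> 0" using alpha_ge1 by (metis not_one_le_zero)
  have i1: "i \<in> {1..n}" and i2: "Suc i \<in> {1..n}" using i by auto
  have g1: "gso b' i = gso b i /\<^sub>R alpha b \<gamma> i"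
    unfolding b'_def by (rule gso_image[OF hA anz i1])
  have g2: "gso b' (Suc i) = gso b (Suc i) /\<^sub>R alpha b \<gamma> (Suc i)"
    unfolding b'_def by (rule gso_image[OF hA anz i2])
  have n1: "norm (gso b' i) = norm (gso b i) / alpha b \<gamma> i"
    using g1 alpha_ge1[of b \<gamma> i] by (simp add: divide_inverse_commute)
  have n2: "norm (gso b' (Suc i)) = norm (gso b (Suc i)) / alpha b \<gamma> (Suc i)"
    using g2 alpha_ge1[of b \<gamma> "Suc i"] by (simp add: divide_inverse_commute)
  have "1 \<in> {1..n}" using i by auto
  then have "gso b 1 \<noteq> 0" using gso_nz[OF basis] by blast
  then have nb: "norm (b 1) > 0" using gso_1[of b] by simp
  have aS: "alpha b \<gamma> (Suc i) = max (alpha b \<gamma> i)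
      (of_int \<lceil>norm (gso b (Suc i)) / (\<gamma> ^ Suc i * norm (b 1))\<rceil>)"
    unfolding k by simp
  have up: "norm (gso b i) \<le> alpha b \<gamma> i * \<gamma> ^ i * norm (b 1)"
    using gso_upper[of i \<gamma> b] i gamma nb by auto
  show "norm (gso b' (Suc i)) > (\<gamma> / 2) * norm (gso b' i)"
    unfolding n1 n2 by (rule arith_step[OF alpha_ge1 lt aS up gamma nb])
qed

end
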